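(* Assume the setting and the CRAIG recurrence described in the context, and let $k\ge1$ be such that $u^{(k)},p^{(k)},\zeta_k$ and $g_k$ (hence $\beta_{k+1}$) are defined. Then $Mu^{(k)}+Ap^{(k)}=0$ and $b-A^Tu^{(k)}+Cp^{(k)}=-\zeta_k\,N g_k$ (which equals $-\zeta_k\beta_{k+1}Nq_{k+1}$ when $\beta_{k+1}>0$). In particular the residual of the second block equation is orthogonal (in the Euclidean inner product) to $q_1,\dots,q_k$, and $\|b-A^Tu^{(k)}+Cp^{(k)}\|_{N^{-1}}=\beta_{k+1}|\zeta_k|$, so that $\|b-A^Tu^{(k)}+Cp^{(k)}\|_{N^{-1}}/\|b\|_{N^{-1}}=\beta_{k+1}|\zeta_k|/\beta_1$.
   Context: Setting: $M\in\mathbb{R}^{m\times m}$ is symmetric positive definite, $A\in\mathbb{R}^{m\times n}$ ($n\le m$) has full column rank, $C\in\mathbb{R}^{n\times n}$ is symmetric positive semidefinite, $b\in\mathbb{R}^n$ is nonzero, and $N\in\mathbb{R}^{n\times n}$ is symmetric positive definite (the preconditioner). For a symmetric positive definite $G$ write $\|x\|_G=(x^TGx)^{1/2}$. The generalized saddle point system is $Mu+Ap=0$, $A^Tu-Cp=b$, with unique solution $(u_*,p_* )$; $S=A^TM^{-1}A+C$. CRAIG recurrence (exact arithmetic): Initialization: $\beta_1=\|b\|_{N^{-1}}$, $q_1=N^{-1}b/\beta_1$, $r_1=q_1$, $w_1=M^{-1}Aq_1$, $s_1=Cr_1$, $\alpha_1=(w_1^TMw_1+r_1^Ts_1)^{1/2}$,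 $v_1=w_1/\alpha_1$, $t_1=s_1/\alpha_1$, $\zeta_1=\beta_1/\alpha_1$, $u^{(1)}=\zeta_1v_1$, $p^{(1)}=-(\zeta_1/\alpha_1)r_1$. For $k=1,2,\dots$: $g_k=N^{-1}(A^Tv_k+t_k)-\alpha_kq_k$, $\beta_{k+1}=\|g_k\|_N$; if $\beta_{k+1}=0$ the recurrence stops; otherwise $q_{k+1}=g_k/\beta_{k+1}$, $w_{k+1}=M^{-1}Aq_{k+1}-\beta_{k+1}v_k$, $r_{k+1}=q_{k+1}-(\beta_{k+1}/\alpha_k)r_k$, $s_{k+1}=Cr_{k+1}$, $\alpha_{k+1}=(w_{k+1}^TMw_{k+1}+r_{k+1}^Ts_{k+1})^{1/2}$, $v_{k+1}=w_{k+1}/\alpha_{k+1}$, $t_{k+1}=s_{k+1}/\alpha_{k+1}$, $\zeta_{k+1}=-(\beta_{k+1}/\alpha_{k+1})\zeta_k$, $u^{(k+1)}=u^{(k)}+\zeta_{k+1}v_{k+1}$, $p^{(k+1)}=p^{(k)}-(\zeta_{k+1}/\alpha_{k+1})r_{k+1}$. *)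

theory Defs
  imports "HOL-Analysis.Analysis"
begin

definition sym_mat :: "real^'n^'n \<Rightarrow> bool" where
  "sym_mat G \<longleftrightarrow> transpose G = G"

definition spd :: "real^'n^'n \<Rightarrow> bool" where
  "spd G \<longleftrightarrow> sym_mat G \<and> (\<forall>x. x \<noteq> 0 \<longrightarrow> x \<bullet> (G *v x) > 0)"

definition spsd :: "real^'n^'n \<Rightarrow> bool" where
  "spsd G \<longleftrightarrow> sym_mat G \<and> (\<forall>x. x \<bullet> (G *v x) \<ge> 0)"

definition gnorm :: "real^'n^'n \<Rightarrow> real^'n \<Rightarrow> real" where
  "gnorm G x = sqrt (x \<bullet> (G *v x))"

record ('m, 'n) craig_st =
  cq :: "real^'n"
  cr :: "real^'n"
  cv :: "real^'m"
  ct :: "real^'n"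
  calpha :: real
  czeta :: real
  cu :: "real^'m"
  cp :: "real^'n"
  cbeta :: real

definition craig_init ::
  "real^'m^'m \<Rightarrow> real^'n^'m \<Rightarrow> real^'n^'n \<Rightarrow> real^'n \<Rightarrow> real^'n^'n \<Rightarrow> ('m,'n) craig_st" where
  "craig_init M A C b N =
    (let beta1 = gnorm (matrix_inv N) b;
         q1 = (1 / beta1) *\<^sub>R (matrix_inv N *v b);
         r1 = q1;
         w1 = matrix_inv M *v (A *v q1);
         s1 = C *v r1;
         alpha1 = sqrt (w1 \<bullet> (M *v w1) + r1 \<bullet> s1);
         v1 = (1 / alpha1) *\<^sub>R w1;
         t1 = (1 / alpha1) *\<^sub>R s1;
         zeta1 = beta1 / alpha1
     in \<lparr> cq = q1, cr = r1, cv = v1, ct = t1, calpha = alpha1, czeta = zeta1,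
          cu = zeta1 *\<^sub>R v1, cp = - ((zeta1 / alpha1) *\<^sub>R r1), cbeta = beta1 \<rparr>)"

definition craig_g_of ::
  "real^'n^'m \<Rightarrow> real^'n^'n \<Rightarrow> ('m,'n) craig_st \<Rightarrow> real^'n" where
  "craig_g_of A N st = matrix_inv N *v (transpose A *v cv st + ct st) - calpha st *\<^sub>R cq st"

definition craig_step ::
  "real^'m^'m \<Rightarrow> real^'n^'m \<Rightarrow> real^'n^'n \<Rightarrow> real^'n^'n \<Rightarrow> ('m,'n) craig_st \<Rightarrow> ('m,'n) craig_st" where
  "craig_step M A C N st =
    (let g = craig_g_of A N st;
         beta' = gnorm N g;
         q' = (1 / beta') *\<^sub>R g;
         w' = matrix_inv M *v (A *v q') - beta' *\<^sub>R cv st;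
         r' = q' - (beta' / calpha st) *\<^sub>R cr st;
         s' = C *v r';
         alpha' = sqrt (w' \<bullet> (M *v w') + r' \<bullet> s');
         v' = (1 / alpha') *\<^sub>R w';
         t' = (1 / alpha') *\<^sub>R s';
         zeta' = - (beta' / alpha') * czeta st
     in \<lparr> cq = q', cr = r', cv = v', ct = t', calpha = alpha', czeta = zeta',
          cu = cu st + zeta' *\<^sub>R v', cp = cp st - (zeta' / alpha') *\<^sub>R r', cbeta = beta' \<rparr>)"

text \<open>craig_state M A C b N j is the state at iteration k = j + 1.\<close>
primrec craig_state ::
  "real^'m^'m \<Rightarrow> real^'n^'m \<Rightarrow> real^'n^'n \<Rightarrow> real^'n \<Rightarrow> real^'n^'n \<Rightarrow> nat \<Rightarrow> ('m,'n) craig_st" where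
  "craig_state M A C b N 0 = craig_init M A C b N"
| "craig_state M A C b N (Suc j) = craig_step M A C N (craig_state M A C b N j)"

text \<open>Accessors indexed by the paper's iteration number k (k >= 1).\<close>
definition "craig_q M A C b N k = cq (craig_state M A C b N (k - 1))"
definition "craig_alpha M A C b N k = calpha (craig_state M A C b N (k - 1))"
definition "craig_zeta M A C b N k = czeta (craig_state M A C b N (k - 1))"
definition "craig_u M A C b N k = cu (craig_state M A C b N (k - 1))"
definition "craig_p M A C b N k = cp (craig_state M A C b N (k - 1))"
definition "craig_beta M A C b N k = cbeta (craig_state M A C b N (k - 1))"
definition "craig_g M A C b N k = craig_g_of A N (craig_state M A C b N (k - 1))"

end

theory Submission
  imports Defs
begin

lemma sym_dot:
  fixes G :: "real^'k^'k"
  assumes "sym_mat G"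
  shows "x \<bullet> (G *v y) = (G *v x) \<bullet> y"
proof -
  have "x \<bullet> (G *v y) = (x v* G) \<bullet> y" by (simp add: dot_lmul_matrix)
  also have "x v* G = transpose G *v x" by simp
  also have "\<dots> = G *v x" using assms by (simp add: sym_mat_def)
  finally show ?thesis .
qed

lemma transp_dot:
  fixes A :: "real^'n^'m"
  shows "x \<bullet> (transpose A *v y) = (A *v x) \<bullet> y"
  by (metis dot_lmul_matrix inner_commute transpose_matrix_vector)

lemma spd_inv:
  fixes G :: "real^'k^'k"
  assumes "spd G"
  shows "G *v (matrix_inv G *v x) = x" "matrix_inv G *v (G *v x) = x"
proof -
  have ker: "\<forall>x. G *v x = 0 \<longrightarrow> x = 0"
  proof (intro allI impI)
    fix x assume "G *v x = 0"
    then have "x \<bullet> (G *v x) = 0" by simp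
    then show "x = 0" using assms unfolding spd_def by (metis less_irrefl)
  qed
  then obtain B :: "real^'k^'k" where "B ** G = mat 1" using matrix_left_invertible_ker by blast
  then have "invertible G" using invertible_left_inverse by blast
  then have "\<exists>A'. G ** A' = mat 1 \<and> A' ** G = mat 1" unfolding invertible_def by blast
  then have "G ** matrix_inv G = mat 1 \<and> matrix_inv G ** G = mat 1"
    unfolding matrix_inv_def by (rule someI_ex)
  then show "G *v (matrix_inv G *v x) = x" "matrix_inv G *v (G *v x) = x"
    by (simp_all add: matrix_vector_mul_assoc)
qed

lemma spd_inv_sym:
  fixes G :: "real^'k^'k"
  assumes "spd G"
  shows "x \<bullet> (matrix_inv G *v y) = (matrix_inv G *v x) \<bullet> y"
proof -
  have s: "sym_mat G" using assms by (simp add: spd_def)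
  have "x \<bullet> (matrix_inv G *v y) = (G *v (matrix_inv G *v x)) \<bullet> (matrix_inv G *v y)"
    using spd_inv[OF assms] by simp
  also have "\<dots> = (matrix_inv G *v x) \<bullet> (G *v (matrix_inv G *v y))"
    using sym_dot[OF s] by simp
  also have "\<dots> = (matrix_inv G *v x) \<bullet> y" using spd_inv[OF assms] by simp
  finally show ?thesis .
qed

lemma spd_nonneg:
  fixes G :: "real^'k^'k"
  assumes "spd G" shows "x \<bullet> (G *v x) \<ge> 0"
  using assms unfolding spd_def by (cases "x = 0") (auto intro: less_imp_le)

lemma spd_inv_nonneg:
  fixes G :: "real^'k^'k"
  assumes "spd G" shows "(matrix_inv G *v y) \<bullet> y \<ge> 0"
proof -
  have "(matrix_inv G *v y) \<bullet> y = (matrix_inv G *v y) \<bullet> (G *v (matrix_inv G *v y))"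
    using spd_inv[OF assms] by simp
  then show ?thesis using spd_nonneg[OF assms] by simp
qed

lemma spd_inv_pos:
  fixes G :: "real^'k^'k"
  assumes "spd G" "y \<noteq> 0" shows "(matrix_inv G *v y) \<bullet> y > 0"
proof -
  have ne: "matrix_inv G *v y \<noteq> 0" using spd_inv(1)[OF assms(1), of y] assms(2) by auto
  have "(matrix_inv G *v y) \<bullet> y = (matrix_inv G *v y) \<bullet> (G *v (matrix_inv G *v y))"
    using spd_inv[OF assms(1)] by simp
  then show ?thesis using ne assms(1) unfolding spd_def by simp
qed

locale craigL =
  fixes M :: "real^'m^'m" and A :: "real^'n^'m" and C N :: "real^'n^'n" and b :: "real^'n"
  assumes spdM: "spd M" and spsdC: "spsd C" and spdN: "spd N" and bnz: "b \<noteq> 0"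
begin

abbreviation "st j \<equiv> craig_state M A C b N j"
abbreviation "qq j \<equiv> cq (st j)"
abbreviation "rr j \<equiv> cr (st j)"
abbreviation "vv j \<equiv> cv (st j)"
abbreviation "tt j \<equiv> ct (st j)"
abbreviation "al j \<equiv> calpha (st j)"
abbreviation "be j \<equiv> cbeta (st j)"
abbreviation "ze j \<equiv> czeta (st j)"
abbreviation "uu j \<equiv> cu (st j)"
abbreviation "pp j \<equiv> cp (st j)"
abbreviation "gg j \<equiv> craig_g_of A N (st j)"
abbreviation "Mi \<equiv> matrix_inv M"
abbreviation "Ni \<equiv> matrix_inv N"

definition Sop :: "real^'n \<Rightarrow> real^'n" where
  "Sop x = transpose A *v (Mi *v (A *v x)) + C *v x"

lemma Sop_diff: "Sop (x - c *\<^sub>R y) = Sop x - c *\<^sub>R Sop y"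
  by (simp add: Sop_def algebra_simps)
lemma Sop_add: "Sop (x + c *\<^sub>R y) = Sop x + c *\<^sub>R Sop y"
  by (simp add: Sop_def algebra_simps)

lemma symC: "sym_mat C" using spsdC by (simp add: spsd_def)
lemma symN: "sym_mat N" using spdN by (simp add: spd_def)

lemma Sop_sym: "x \<bullet> Sop y = y \<bullet> Sop x"
proof -
  have "x \<bullet> (transpose A *v (Mi *v (A *v y))) = (A *v x) \<bullet> (Mi *v (A *v y))"
    by (rule transp_dot)
  also have "\<dots> = (Mi *v (A *v x)) \<bullet> (A *v y)" by (rule spd_inv_sym[OF spdM])
  also have "\<dots> = y \<bullet> (transpose A *v (Mi *v (A *v x)))"
    by (metis transp_dot inner_commute)
  finally have 1: "x \<bullet> (transpose A *v (Mi *v (A *v y))) = y \<bullet> (transpose A *v (Mi *v (A *v x)))" .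
  have 2: "x \<bullet> (C *v y) = y \<bullet> (C *v x)" using sym_dot[OF symC] by (simp add: inner_commute)
  show ?thesis using 1 2 by (simp add: Sop_def inner_add_right)
qed

lemma N_sym: "x \<bullet> (N *v y) = y \<bullet> (N *v x)"
  using sym_dot[OF symN] by (simp add: inner_commute)

lemma step_fields:
  "be (Suc j) = gnorm N (gg j)"
  "qq (Suc j) = (1 / be (Suc j)) *\<^sub>R gg j"
  "rr (Suc j) = qq (Suc j) - (be (Suc j) / al j) *\<^sub>R rr j"
  "vv (Suc j) = (1 / al (Suc j)) *\<^sub>R (Mi *v (A *v qq (Suc j)) - be (Suc j) *\<^sub>R vv j)"
  "tt (Suc j) = (1 / al (Suc j)) *\<^sub>R (C *v rr (Suc j))"
  "al (Suc j) = sqrt ((Mi *v (A *v qq (Suc j)) - be (Suc j) *\<^sub>R vv j) \<bullet> (M *v (Mi *v (A *v qq (Suc j)) - be (Suc j) *\<^sub>R vv j)) + rr (Suc j) \<bullet> (C *v rr (Suc j)))"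
  "ze (Suc j) = - (be (Suc j) / al (Suc j)) * ze j"
  "uu (Suc j) = uu j + ze (Suc j) *\<^sub>R vv (Suc j)"
  "pp (Suc j) = pp j - (ze (Suc j) / al (Suc j)) *\<^sub>R rr (Suc j)"
  by (simp_all add: craig_step_def Let_def)

lemma init_fields:
  "be 0 = gnorm Ni b"
  "qq 0 = (1 / be 0) *\<^sub>R (Ni *v b)"
  "rr 0 = qq 0"
  "vv 0 = (1 / al 0) *\<^sub>R (Mi *v (A *v qq 0))"
  "tt 0 = (1 / al 0) *\<^sub>R (C *v rr 0)"
  "al 0 = sqrt ((Mi *v (A *v qq 0)) \<bullet> (M *v (Mi *v (A *v qq 0))) + rr 0 \<bullet> (C *v rr 0))"
  "ze 0 = be 0 / al 0"
  "uu 0 = ze 0 *\<^sub>R vv 0"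
  "pp 0 = - ((ze 0 / al 0) *\<^sub>R rr 0)"
  by (simp_all add: craig_init_def Let_def)

declare craig_state.simps[simp del]

lemma mv_neg: "(G::real^'a^'b) *v (- x) = - (G *v x)"
  by (metis diff_0 matrix_vector_mult_0_right matrix_vector_mult_diff_distrib)

lemma MMi: "M *v (Mi *v x) = x" by (rule spd_inv(1)[OF spdM])
lemma NNi: "N *v (Ni *v x) = x" by (rule spd_inv(1)[OF spdN])
lemma NiN: "Ni *v (N *v x) = x" by (rule spd_inv(2)[OF spdN])

lemma V_inv: "vv j = (1 / al j) *\<^sub>R (Mi *v (A *v rr j)) \<and>
   al j = sqrt ((Mi *v (A *v rr j)) \<bullet> (A *v rr j) + rr j \<bullet> (C *v rr j))"
proof (induction j)
  case 0
  then show ?case by (simp add: init_fields(3,4,6) MMi)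
next
  case (Suc j)
  have w: "Mi *v (A *v qq (Suc j)) - be (Suc j) *\<^sub>R vv j = Mi *v (A *v rr (Suc j))"
    using Suc.IH by (simp add: step_fields(3) algebra_simps)
  show ?case using w by (simp add: step_fields(4,6) MMi)
qed

lemma T_eq: "tt j = (1 / al j) *\<^sub>R (C *v rr j)"
  by (cases j) (simp_all add: init_fields step_fields)

lemma MV: "M *v vv j = (1 / al j) *\<^sub>R (A *v rr j)"
  using V_inv[of j] by (simp add: algebra_simps MMi)

lemma alpha_sq: "al j ^ 2 = rr j \<bullet> Sop (rr j)"
proof -
  have n1: "(Mi *v (A *v rr j)) \<bullet> (A *v rr j) \<ge> 0" by (rule spd_inv_nonneg[OF spdM])
  have n2: "rr j \<bullet> (C *v rr j) \<ge> 0" using spsdC by (simp add: spsd_def)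
  have "rr j \<bullet> Sop (rr j) = (Mi *v (A *v rr j)) \<bullet> (A *v rr j) + rr j \<bullet> (C *v rr j)"
    unfolding Sop_def inner_add_right transp_dot by (simp add: inner_commute)
  then show ?thesis using V_inv[of j] n1 n2 by simp
qed

lemma Ng_raw: "N *v gg j = transpose A *v vv j + tt j - al j *\<^sub>R (N *v qq j)"
  by (simp add: craig_g_of_def algebra_simps NNi)

lemma Ng: "N *v gg j = (1 / al j) *\<^sub>R Sop (rr j) - al j *\<^sub>R (N *v qq j)"
proof -
  have "transpose A *v vv j + tt j = (1 / al j) *\<^sub>R Sop (rr j)"
    using V_inv[of j] T_eq[of j] by (simp add: Sop_def algebra_simps)
  then show ?thesis using Ng_raw by simp
qed

lemma U_inv: "M *v uu j + A *v pp j = 0"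
proof (induction j)
  case 0
  then show ?case by (simp add: init_fields(8,9) MV algebra_simps mv_neg)
next
  case (Suc j)
  have "M *v uu (Suc j) + A *v pp (Suc j) = (M *v uu j + A *v pp j)
     + ze (Suc j) *\<^sub>R (M *v vv (Suc j)) - (ze (Suc j) / al (Suc j)) *\<^sub>R (A *v rr (Suc j))"
    by (simp add: step_fields(8,9) algebra_simps)
  also have "\<dots> = 0" using Suc.IH by (simp add: MV)
  finally show ?case .
qed

lemma be0_pos: "be 0 > 0"
proof -
  have "(Ni *v b) \<bullet> b > 0" by (rule spd_inv_pos[OF spdN bnz])
  then show ?thesis by (simp add: init_fields(1) gnorm_def inner_commute)
qed

lemma Nq0: "N *v qq 0 = (1 / be 0) *\<^sub>R b"
  by (simp add: init_fields(2) algebra_simps NNi)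

lemma Nq_suc: "N *v qq (Suc j) = (1 / be (Suc j)) *\<^sub>R (N *v gg j)"
  by (simp add: step_fields(2) algebra_simps)

lemma g_suc: "be (Suc j) \<noteq> 0 \<Longrightarrow> gg j = be (Suc j) *\<^sub>R qq (Suc j)"
  by (simp add: step_fields(2))

lemma R_inv:
  assumes "\<forall>i\<le>j. al i \<noteq> 0" "\<forall>i. 1 \<le> i \<longrightarrow> i \<le> j \<longrightarrow> be i \<noteq> 0"
  shows "b - transpose A *v uu j + C *v pp j = - (ze j *\<^sub>R (N *v gg j))"
  using assms
proof (induction j)
  case 0
  have a0: "al 0 \<noteq> 0" using 0 by simp
  have za: "ze 0 * al 0 = be 0" using a0 by (simp add: init_fields(7))
  have "- (ze 0 *\<^sub>R (N *v gg 0)) = - (ze 0 *\<^sub>R (transpose A *v vv 0)) - (ze 0 / al 0) *\<^sub>R (C *v rr 0)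
      + (ze 0 * al 0 * (1 / be 0)) *\<^sub>R b"
    by (simp add: Ng_raw T_eq Nq0 algebra_simps)
  also have "ze 0 * al 0 * (1 / be 0) = 1" using za be0_pos by simp
  finally show ?case by (simp add: init_fields(8,9) algebra_simps mv_neg)
next
  case (Suc j)
  have IH: "b - transpose A *v uu j + C *v pp j = - (ze j *\<^sub>R (N *v gg j))"
    using Suc by auto
  have a1: "al (Suc j) \<noteq> 0" and b1: "be (Suc j) \<noteq> 0" using Suc.prems by auto
  have za: "ze (Suc j) * al (Suc j) = - be (Suc j) * ze j" using a1 by (simp add: step_fields(7))
  have "- (ze (Suc j) *\<^sub>R (N *v gg (Suc j))) = - (ze (Suc j) *\<^sub>R (transpose A *v vv (Suc j)))
      - (ze (Suc j) / al (Suc j)) *\<^sub>R (C *v rr (Suc j))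
      + (ze (Suc j) * al (Suc j) * (1 / be (Suc j))) *\<^sub>R (N *v gg j)"
    by (simp add: Ng_raw[of "Suc j"] T_eq[of "Suc j"] Nq_suc algebra_simps)
  also have "ze (Suc j) * al (Suc j) * (1 / be (Suc j)) = - ze j" using za b1 by simp
  finally have fin: "- (ze (Suc j) *\<^sub>R (N *v gg (Suc j))) = - (ze (Suc j) *\<^sub>R (transpose A *v vv (Suc j)))
      - (ze (Suc j) / al (Suc j)) *\<^sub>R (C *v rr (Suc j)) - ze j *\<^sub>R (N *v gg j)" (is "_ = ?F") by simp
  have e: "b - transpose A *v uu (Suc j) + C *v pp (Suc j) = (b - transpose A *v uu j + C *v pp j)
     - ze (Suc j) *\<^sub>R (transpose A *v vv (Suc j)) - (ze (Suc j) / al (Suc j)) *\<^sub>R (C *v rr (Suc j))"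
    unfolding step_fields(8,9) by (simp only: algebra_simps matrix_vector_right_distrib)
  show ?case unfolding e IH fin by (simp add: algebra_simps del: transpose_matrix_vector)
qed

definition "hyps j \<longleftrightarrow> (\<forall>i\<le>j. al i \<noteq> 0) \<and> (\<forall>i. 1 \<le> i \<longrightarrow> i \<le> j \<longrightarrow> be i \<noteq> 0)"
definition "PP j \<longleftrightarrow> (\<forall>i\<le>j. \<forall>l\<le>j. qq i \<bullet> (N *v qq l) = (if i = l then 1 else 0))
   \<and> (\<forall>i\<le>j. \<forall>l\<le>j. i \<noteq> l \<longrightarrow> rr i \<bullet> Sop (rr l) = 0)"

lemma qnorm0: "qq 0 \<bullet> (N *v qq 0) = 1"
proof -
  have pos: "(Ni *v b) \<bullet> b > 0" by (rule spd_inv_pos[OF spdN bnz])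
  have bsq: "be 0 ^ 2 = (Ni *v b) \<bullet> b"
    using pos by (simp add: init_fields(1) gnorm_def inner_commute)
  have "qq 0 \<bullet> (N *v qq 0) = (1 / be 0 ^ 2) * ((Ni *v b) \<bullet> b)"
    by (simp add: init_fields(2) matrix_vector_mult_scaleR NNi power2_eq_square)
  then show ?thesis using pos bsq be0_pos by simp
qed

lemma qnorm_suc: "be (Suc j) \<noteq> 0 \<Longrightarrow> qq (Suc j) \<bullet> (N *v qq (Suc j)) = 1"
proof -
  assume nz: "be (Suc j) \<noteq> 0"
  have nn: "gg j \<bullet> (N *v gg j) \<ge> 0" by (rule spd_nonneg[OF spdN])
  have bsq: "be (Suc j) ^ 2 = gg j \<bullet> (N *v gg j)"
    using nn by (simp add: step_fields(1) gnorm_def)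
  have "qq (Suc j) \<bullet> (N *v qq (Suc j)) = (1 / be (Suc j) ^ 2) * (gg j \<bullet> (N *v gg j))"
    by (simp add: step_fields(2) algebra_simps power2_eq_square)
  moreover have "gg j \<bullet> (N *v gg j) \<noteq> 0" using nz by (simp add: bsq[symmetric])
  ultimately show ?thesis using bsq nz by simp
qed

lemma q_r0: "qq 0 = rr 0" by (simp add: init_fields(3))
lemma q_rS: "qq (Suc i) = rr (Suc i) + (be (Suc i) / al i) *\<^sub>R rr i"
  by (simp add: step_fields(3))

lemma Sr: "al i \<noteq> 0 \<Longrightarrow> be (Suc i) \<noteq> 0 \<Longrightarrow>
  Sop (rr i) = al i *\<^sub>R (al i *\<^sub>R (N *v qq i) + be (Suc i) *\<^sub>R (N *v qq (Suc i)))"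
proof -
  assume a: "al i \<noteq> 0" and bb: "be (Suc i) \<noteq> 0"
  have "be (Suc i) *\<^sub>R (N *v qq (Suc i)) = (1 / al i) *\<^sub>R Sop (rr i) - al i *\<^sub>R (N *v qq i)"
    using Ng[of i] g_suc[OF bb] by (simp add: algebra_simps)
  then have "(1 / al i) *\<^sub>R Sop (rr i) = al i *\<^sub>R (N *v qq i) + be (Suc i) *\<^sub>R (N *v qq (Suc i))"
    by (simp add: algebra_simps)
  then have "al i *\<^sub>R ((1 / al i) *\<^sub>R Sop (rr i)) = al i *\<^sub>R (al i *\<^sub>R (N *v qq i) + be (Suc i) *\<^sub>R (N *v qq (Suc i)))"
    by simp
  then show ?thesis using a by simp
qed

lemma G_orth:
  assumes h: "hyps j" and P: "PP j" and ij: "i \<le> j"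
  shows "qq i \<bullet> (N *v gg j) = 0"
proof -
  have aj: "al j \<noteq> 0" using h by (simp add: hyps_def)
  have qS: "qq i \<bullet> Sop (rr j) = (if i = j then al j ^ 2 else 0)"
  proof (cases i)
    case 0
    then show ?thesis using P ij alpha_sq[of j] by (auto simp: PP_def q_r0)
  next
    case (Suc i')
    have "qq i \<bullet> Sop (rr j) = rr i \<bullet> Sop (rr j) + (be i / al i') * (rr i' \<bullet> Sop (rr j))"
      using Suc by (simp add: q_rS inner_add_left)
    then show ?thesis using P ij alpha_sq[of j] Suc by (auto simp: PP_def)
  qed
  have "qq i \<bullet> (N *v gg j) = (1 / al j) * (qq i \<bullet> Sop (rr j)) - al j * (qq i \<bullet> (N *v qq j))"
    by (simp add: Ng inner_diff_right)
  then show ?thesis using qS P ij aj by (auto simp: PP_def power2_eq_square)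
qed

lemma PP_step:
  assumes h: "hyps (Suc j)" and P: "PP j"
  shows "PP (Suc j)"
proof -
  have hj: "hyps j" using h by (auto simp: hyps_def)
  have bS: "be (Suc j) \<noteq> 0" and aj: "al j \<noteq> 0" using h by (auto simp: hyps_def)
  have new: "qq (Suc j) \<bullet> (N *v qq l) = 0" if "l \<le> j" for l
  proof -
    have "qq (Suc j) \<bullet> (N *v qq l) = (1 / be (Suc j)) * (qq l \<bullet> (N *v gg j))"
      by (simp add: step_fields(2) N_sym[of _ "qq l"] matrix_vector_mult_scaleR)
    then show ?thesis using G_orth[OF hj P that] by simp
  qed
  have Q: "\<forall>i\<le>Suc j. \<forall>l\<le>Suc j. qq i \<bullet> (N *v qq l) = (if i = l then 1 else 0)"
  proof (intro allI impI)
    fix i l assume i: "i \<le> Suc j" and l: "l \<le> Suc j"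
    show "qq i \<bullet> (N *v qq l) = (if i = l then 1 else 0)"
    proof (cases "i = Suc j")
      case True
      then show ?thesis using new qnorm_suc[OF bS] l by (cases "l = Suc j") auto
    next
      case False
      then have i': "i \<le> j" using i by simp
      show ?thesis
      proof (cases "l = Suc j")
        case True
        then show ?thesis using new[OF i'] N_sym[of "qq i" "qq l"] i' by auto
      next
        case False
        then show ?thesis using P i' l by (auto simp: PP_def)
      qed
    qed
  qed
  have newr: "rr (Suc j) \<bullet> Sop (rr l) = 0" if l: "l \<le> j" for l
  proof -
    have al: "al l \<noteq> 0" and bl: "be (Suc l) \<noteq> 0" using h l by (auto simp: hyps_def)
    have "qq (Suc j) \<bullet> Sop (rr l) = al l * (al l * (qq (Suc j) \<bullet> (N *v qq l))
          + be (Suc l) * (qq (Suc j) \<bullet> (N *v qq (Suc l))))"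
      by (simp add: Sr[OF al bl] inner_add_right)
    also have "\<dots> = (if l = j then al j * be (Suc j) else 0)"
      using Q l by auto
    finally have 1: "qq (Suc j) \<bullet> Sop (rr l) = (if l = j then al j * be (Suc j) else 0)" .
    have 2: "rr j \<bullet> Sop (rr l) = (if l = j then al j ^ 2 else 0)"
      using P l alpha_sq[of j] by (auto simp: PP_def)
    have "rr (Suc j) \<bullet> Sop (rr l) = qq (Suc j) \<bullet> Sop (rr l) - (be (Suc j) / al j) * (rr j \<bullet> Sop (rr l))"
      by (simp add: step_fields(3) inner_diff_left)
    then show ?thesis using 1 2 aj by (auto simp: power2_eq_square)
  qed
  have R: "\<forall>i\<le>Suc j. \<forall>l\<le>Suc j. i \<noteq> l \<longrightarrow> rr i \<bullet> Sop (rr l) = 0"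
  proof (intro allI impI)
    fix i l assume i: "i \<le> Suc j" and l: "l \<le> Suc j" and ne: "i \<noteq> l"
    show "rr i \<bullet> Sop (rr l) = 0"
    proof (cases "i = Suc j")
      case True
      then show ?thesis using newr l ne by auto
    next
      case False
      then have i': "i \<le> j" using i by simp
      show ?thesis
      proof (cases "l = Suc j")
        case True
        then show ?thesis using newr[OF i'] Sop_sym[of "rr i" "rr l"] by auto
      next
        case False
        then show ?thesis using P i' l ne by (auto simp: PP_def)
      qed
    qed
  qed
  show ?thesis using Q R by (simp add: PP_def)
qed

lemma PP_all: "hyps j \<Longrightarrow> PP j"
proof (induction j)
  case 0
  then show ?case by (simp add: PP_def qnorm0)
next
  case (Suc j)
  have "hyps j" using Suc.prems by (auto simp: hyps_def)
  then show ?case using Suc PP_step by blast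
qed

lemma gnorm_res: "gnorm Ni (- (z *\<^sub>R (N *v gg j))) = be (Suc j) * \<bar>z\<bar>"
proof -
  have nn: "gg j \<bullet> (N *v gg j) \<ge> 0" by (rule spd_nonneg[OF spdN])
  have "(- (z *\<^sub>R (N *v gg j))) \<bullet> (Ni *v (- (z *\<^sub>R (N *v gg j)))) = z ^ 2 * (gg j \<bullet> (N *v gg j))"
    by (simp add: mv_neg matrix_vector_mult_scaleR NiN power2_eq_square inner_commute)
  then have "gnorm Ni (- (z *\<^sub>R (N *v gg j))) = \<bar>z\<bar> * sqrt (gg j \<bullet> (N *v gg j))"
    by (simp add: gnorm_def real_sqrt_mult)
  then show ?thesis by (simp add: step_fields(1) gnorm_def mult.commute)
qed

lemma main_j:
  assumes h: "hyps j"
  shows "M *v uu j + A *v pp j = 0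
    \<and> b - transpose A *v uu j + C *v pp j = - (ze j *\<^sub>R (N *v gg j))
    \<and> (be (Suc j) > 0 \<longrightarrow> b - transpose A *v uu j + C *v pp j
          = - ((ze j * be (Suc j)) *\<^sub>R (N *v qq (Suc j))))
    \<and> (\<forall>i\<le>j. (b - transpose A *v uu j + C *v pp j) \<bullet> qq i = 0)
    \<and> gnorm Ni (b - transpose A *v uu j + C *v pp j) = be (Suc j) * \<bar>ze j\<bar>
    \<and> gnorm Ni (b - transpose A *v uu j + C *v pp j) / gnorm Ni b = be (Suc j) * \<bar>ze j\<bar> / be 0"
proof -
  have R: "b - transpose A *v uu j + C *v pp j = - (ze j *\<^sub>R (N *v gg j))"
    using h unfolding hyps_def by (intro R_inv) auto
  have c3: "be (Suc j) > 0 \<longrightarrow> b - transpose A *v uu j + C *v pp j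
          = - ((ze j * be (Suc j)) *\<^sub>R (N *v qq (Suc j)))"
  proof
    assume "be (Suc j) > 0"
    then have "gg j = be (Suc j) *\<^sub>R qq (Suc j)" by (intro g_suc) simp
    then show "b - transpose A *v uu j + C *v pp j = - ((ze j * be (Suc j)) *\<^sub>R (N *v qq (Suc j)))"
      unfolding R by (simp add: matrix_vector_mult_scaleR)
  qed
  have c4: "\<forall>i\<le>j. (b - transpose A *v uu j + C *v pp j) \<bullet> qq i = 0"
  proof (intro allI impI)
    fix i assume "i \<le> j"
    then have "qq i \<bullet> (N *v gg j) = 0" using G_orth[OF h PP_all[OF h]] by blast
    then show "(b - transpose A *v uu j + C *v pp j) \<bullet> qq i = 0"
      unfolding R by (simp add: inner_commute)
  qed
  have c5: "gnorm Ni (b - transpose A *v uu j + C *v pp j) = be (Suc j) * \<bar>ze j\<bar>"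
    unfolding R by (rule gnorm_res)
  show ?thesis using U_inv[of j] R c3 c4 c5 by (simp add: init_fields(1))
qed

end

theorem mainTheorem3:
  fixes M :: "real^'m^'m" and A :: "real^'n^'m" and C N :: "real^'n^'n"
    and b :: "real^'n" and k :: nat
  assumes "spd M" and "CARD('n) \<le> CARD('m)" and "rank A = CARD('n)"
    and "spsd C" and "b \<noteq> 0" and "spd N"
    and "k \<ge> 1"
    and defined_beta: "\<forall>j\<in>{2..k}. craig_beta M A C b N j \<noteq> 0"
    and defined_alpha: "\<forall>j\<in>{1..k}. craig_alpha M A C b N j \<noteq> 0"
  shows "M *v craig_u M A C b N k + A *v craig_p M A C b N k = 0
    \<and> b - transpose A *v craig_u M A C b N k + C *v craig_p M A C b N k
        = - (craig_zeta M A C b N k *\<^sub>R (N *v craig_g M A C b N k))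
    \<and> (craig_beta M A C b N (k + 1) > 0 \<longrightarrow>
        b - transpose A *v craig_u M A C b N k + C *v craig_p M A C b N k
        = - ((craig_zeta M A C b N k * craig_beta M A C b N (k + 1))
               *\<^sub>R (N *v craig_q M A C b N (k + 1))))
    \<and> (\<forall>j\<in>{1..k}. (b - transpose A *v craig_u M A C b N k + C *v craig_p M A C b N k)
                       \<bullet> craig_q M A C b N j = 0)
    \<and> gnorm (matrix_inv N) (b - transpose A *v craig_u M A C b N k + C *v craig_p M A C b N k)
        = craig_beta M A C b N (k + 1) * \<bar>craig_zeta M A C b N k\<bar>
    \<and> gnorm (matrix_inv N) (b - transpose A *v craig_u M A C b N k + C *v craig_p M A C b N k)
        / gnorm (matrix_inv N) b
        = craig_beta M A C b N (k + 1) * \<bar>craig_zeta M A C b N k\<bar> / craig_beta M A C b N 1"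
proof -
  interpret L: craigL M A C N b using assms by (unfold_locales) auto
  obtain j where kj: "k = Suc j" using assms(7) by (cases k) auto
  have h: "L.hyps j"
    unfolding L.hyps_def
  proof (intro conjI allI impI)
    fix i assume "i \<le> j"
    then have "Suc i \<in> {1..k}" using kj by simp
    then show "calpha (craig_state M A C b N i) \<noteq> 0"
      using defined_alpha unfolding craig_alpha_def by fastforce
  next
    fix i assume "1 \<le> i" "i \<le> j"
    then have "Suc i \<in> {2..k}" using kj by simp
    then show "cbeta (craig_state M A C b N i) \<noteq> 0"
      using defined_beta unfolding craig_beta_def by fastforce
  qed
  have m: "?thesis = (M *v L.uu j + A *v L.pp j = 0
    \<and> b - transpose A *v L.uu j + C *v L.pp j = - (L.ze j *\<^sub>R (N *v L.gg j))
    \<and> (L.be (Suc j) > 0 \<longrightarrow> b - transpose A *v L.uu j + C *v L.pp j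
          = - ((L.ze j * L.be (Suc j)) *\<^sub>R (N *v L.qq (Suc j))))
    \<and> (\<forall>i\<in>{1..Suc j}. (b - transpose A *v L.uu j + C *v L.pp j) \<bullet> L.qq (i - 1) = 0)
    \<and> gnorm (matrix_inv N) (b - transpose A *v L.uu j + C *v L.pp j) = L.be (Suc j) * \<bar>L.ze j\<bar>
    \<and> gnorm (matrix_inv N) (b - transpose A *v L.uu j + C *v L.pp j) / gnorm (matrix_inv N) b
         = L.be (Suc j) * \<bar>L.ze j\<bar> / L.be 0)"
    unfolding kj craig_u_def craig_p_def craig_zeta_def craig_g_def craig_beta_def craig_q_def
    by (simp only: diff_Suc_Suc minus_nat.diff_0 add_Suc_right add_0_right One_nat_def)
  have eq: "(\<forall>i\<in>{1..Suc j}. (b - transpose A *v L.uu j + C *v L.pp j) \<bullet> L.qq (i - 1) = 0)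
     = (\<forall>i\<le>j. (b - transpose A *v L.uu j + C *v L.pp j) \<bullet> L.qq i = 0)"
  proof
    assume H: "\<forall>i\<in>{1..Suc j}. (b - transpose A *v L.uu j + C *v L.pp j) \<bullet> L.qq (i - 1) = 0"
    show "\<forall>i\<le>j. (b - transpose A *v L.uu j + C *v L.pp j) \<bullet> L.qq i = 0"
    proof (intro allI impI)
      fix i assume "i \<le> j"
      then have "Suc i \<in> {1..Suc j}" by simp
      from H[rule_format, OF this] show "(b - transpose A *v L.uu j + C *v L.pp j) \<bullet> L.qq i = 0" by simp
    qed
  next
    assume H: "\<forall>i\<le>j. (b - transpose A *v L.uu j + C *v L.pp j) \<bullet> L.qq i = 0"
    show "\<forall>i\<in>{1..Suc j}. (b - transpose A *v L.uu j + C *v L.pp j) \<bullet> L.qq (i - 1) = 0"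
    proof
      fix i assume "i \<in> {1..Suc j}"
      then have "i - 1 \<le> j" by auto
      from H[rule_format, OF this] show "(b - transpose A *v L.uu j + C *v L.pp j) \<bullet> L.qq (i - 1) = 0" .
    qed
  qed
  show ?thesis unfolding m eq using L.main_j[OF h] by blast
qed

end
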